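(* Let $(X,\mathcal S,\mu)$ be a finite positive (not necessarily complete) measure space, let $0\le k\le d$ be integers, and let $X\ni x\mapsto V_x\in\mathrm{Gr}_k(\mathbb R^d)$ be a map. The following are equivalent: 1) there is $X_1\in\mathcal S$ with $\mu(X\setminus X_1)=0$ such that $X_1\ni x\mapsto V_x$ is measurable, $\mathrm{Gr}_k(\mathbb R^d)$ being endowed with its Borel $\sigma$-algebra; 2) there is $X_2\in\mathcal S$ with $\mu(X\setminus X_2)=0$ and measurable maps $v_1,\dots,v_k:X_2\to\mathbb R^d$ such that for all $x\in X_2$, $\{v_1(x),\dots,v_k(x)\}$ is an orthonormal basis of $V_x$; 3) there is $X_3\in\mathcal S$ with $\mu(X\setminus X_3)=0$ and a bi-measurable bijection $\Lambda$ from $\{(x,v):x\in X_3,v\in V_x\}$ onto $X_3\times\mathbb R^k$ which covers the identity of $X$ and is a linear isometry on each fiber, i.e. for each $x\in X_3$, $\Lambda(x,\cdot)$ is a linear isometry from $V_x$ onto $\{x\}\times\mathbb R^k$.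
   Context: $\mathrm{Gr}_k(\mathbb R^d)$ is the Grassmannian of $k$-dimensional linear subspaces of $\mathbb R^d$; $\mathbb R^d$ carries its Euclidean inner product and Borel $\sigma$-algebra. The sets $\{(x,v):x\in X_3,v\in V_x\}\subset X\times\mathbb R^d$ and $X_3\times\mathbb R^k$ carry the traces of the product $\sigma$-algebras $\mathcal S\otimes\mathcal B(\mathbb R^d)$ and $\mathcal S\otimes\mathcal B(\mathbb R^k)$; a bijection is bi-measurable if it and its inverse are measurable. *)

theory Defs
  imports "HOL-Analysis.Analysis"
begin

definition grassmannian :: "nat \<Rightarrow> ('a::euclidean_space) set set" where
  "grassmannian k = {V. subspace V \<and> dim V = k}"

definition orth_proj :: "('a::euclidean_space) set \<Rightarrow> 'a \<Rightarrow> 'a" where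
  "orth_proj V x = (THE p. p \<in> V \<and> (\<forall>v\<in>V. (x - p) \<bullet> v = 0))"

definition grass_dist :: "('a::euclidean_space) set \<Rightarrow> 'a set \<Rightarrow> real" where
  "grass_dist V W = onorm (\<lambda>x. orth_proj V x - orth_proj W x)"

definition grass_open :: "nat \<Rightarrow> ('a::euclidean_space) set set \<Rightarrow> bool" where
  "grass_open k U \<longleftrightarrow> U \<subseteq> grassmannian k \<and>
     (\<forall>V\<in>U. \<exists>e>0. \<forall>W\<in>grassmannian k. grass_dist V W < e \<longrightarrow> W \<in> U)"

definition grass_borel :: "nat \<Rightarrow> ('a::euclidean_space) set measure" where
  "grass_borel k = sigma (grassmannian k) {U. grass_open k U}"

text \<open>R^k, modelled as extensional functions on {..<k} (allows k = 0),
  with its Borel sigma-algebra (finite product of Borel lines).\<close>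
definition Rk :: "nat \<Rightarrow> (nat \<Rightarrow> real) set" where
  "Rk k = ({..<k} \<rightarrow>\<^sub>E (UNIV :: real set))"

definition Rk_borel :: "nat \<Rightarrow> (nat \<Rightarrow> real) measure" where
  "Rk_borel k = (\<Pi>\<^sub>M i\<in>{..<k}. (borel :: real measure))"

end

theory Submission
  imports Defs "HOL-Analysis.Analysis"
begin


lemma orth_proj_unique:
  fixes W :: "'a::euclidean_space set"
  assumes "subspace W" "p \<in> W" "\<forall>v\<in>W. (y - p) \<bullet> v = 0" "q \<in> W" "\<forall>v\<in>W. (y - q) \<bullet> v = 0"
  shows "p = q"
proof -
  have pq: "p - q \<in> W" using assms subspace_diff by blast
  have "(p - q) \<bullet> (p - q) = (y - q) \<bullet> (p - q) - (y - p) \<bullet> (p - q)"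
    by (simp add: inner_diff_left)
  also have "\<dots> = 0" using assms pq by simp
  finally show ?thesis by simp
qed

lemma orth_proj_exists:
  fixes W :: "'a::euclidean_space set"
  assumes "subspace W"
  shows "\<exists>p\<in>W. \<forall>v\<in>W. (y - p) \<bullet> v = 0"
proof -
  obtain a z where "a \<in> span W" "\<And>w. w \<in> span W \<Longrightarrow> orthogonal z w" "y = a + z"
    using orthogonal_subspace_decomp_exists[of W y] by blast
  then show ?thesis using assms span_eq_iff
    by (metis add_diff_cancel_left' orthogonal_def)
qed

lemma orth_proj:
  fixes W :: "'a::euclidean_space set"
  assumes "subspace W"
  shows "orth_proj W y \<in> W" "\<forall>v\<in>W. (y - orth_proj W y) \<bullet> v = 0"
proof -
  have "\<exists>!p. p \<in> W \<and> (\<forall>v\<in>W. (y - p) \<bullet> v = 0)"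
    using orth_proj_exists[OF assms] orth_proj_unique[OF assms] by blast
  then have "orth_proj W y \<in> W \<and> (\<forall>v\<in>W. (y - orth_proj W y) \<bullet> v = 0)"
    unfolding orth_proj_def by (rule theI')
  then show "orth_proj W y \<in> W" "\<forall>v\<in>W. (y - orth_proj W y) \<bullet> v = 0" by auto
qed

lemma orth_proj_eq:
  fixes W :: "'a::euclidean_space set"
  assumes "subspace W" "p \<in> W" "\<forall>v\<in>W. (y - p) \<bullet> v = 0"
  shows "orth_proj W y = p"
  using orth_proj[OF assms(1)] orth_proj_unique[OF assms(1)] assms by blast

lemma linear_orth_proj:
  fixes W :: "'a::euclidean_space set"
  assumes "subspace W"
  shows "linear (orth_proj W)"
proof (rule linearI)
  fix a b
  show "orth_proj W (a + b) = orth_proj W a + orth_proj W b"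
    using orth_proj[OF assms, of a] orth_proj[OF assms, of b]
    by (intro orth_proj_eq assms) (auto simp: subspace_add[OF assms] inner_diff_left inner_add_left algebra_simps)
next
  fix c :: real and a
  have "\<forall>v\<in>W. (c *\<^sub>R a - c *\<^sub>R orth_proj W a) \<bullet> v = 0"
    using orth_proj(2)[OF assms, of a]
    by (metis inner_scaleR_left mult_zero_right scaleR_right_diff_distrib)
  then show "orth_proj W (c *\<^sub>R a) = c *\<^sub>R orth_proj W a"
    using orth_proj[OF assms, of a] by (intro orth_proj_eq assms) (auto simp: subspace_scale[OF assms])
qed

lemma bounded_linear_orth_proj:
  fixes W :: "'a::euclidean_space set"
  assumes "subspace W"
  shows "bounded_linear (orth_proj W)"
  using linear_orth_proj[OF assms] linear_conv_bounded_linear by blast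

lemma orth_proj_diff_le:
  fixes W W' :: "'a::euclidean_space set"
  assumes "subspace W" "subspace W'"
  shows "norm (orth_proj W y - orth_proj W' y) \<le> grass_dist W W' * norm y"
  unfolding grass_dist_def
  by (rule onorm) (intro bounded_linear_sub bounded_linear_orth_proj assms)

definition onf :: "nat \<Rightarrow> (nat \<Rightarrow> 'a::euclidean_space) \<Rightarrow> bool" where
  "onf k u \<longleftrightarrow> (\<forall>i<k. \<forall>j<k. u i \<bullet> u j = (if i = j then 1 else 0))"

lemma onf_iff:
  "onf k u \<longleftrightarrow> (\<forall>i<k. norm (u i) = 1) \<and> (\<forall>i<k. \<forall>j<k. i \<noteq> j \<longrightarrow> u i \<bullet> u j = 0)"
  unfolding onf_def by (auto simp: norm_eq_1)

lemma sum_onf: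
  assumes "onf k u" "j < k"
  shows "(\<Sum>i<k. c i *\<^sub>R u i) \<bullet> u j = c j"
proof -
  have "(\<Sum>i<k. c i *\<^sub>R u i) \<bullet> u j = (\<Sum>i<k. c i * (u i \<bullet> u j))"
    by (simp add: inner_sum_left)
  also have "\<dots> = (\<Sum>i<k. if i = j then c i else 0)"
    by (rule sum.cong) (use assms in \<open>auto simp: onf_def\<close>)
  also have "\<dots> = c j" using assms by simp
  finally show ?thesis .
qed

lemma span_frame_sum:
  "(\<Sum>i<k. c i *\<^sub>R u i) \<in> span (u ` {..<k})"
  by (intro span_sum span_mul span_base) auto

lemma frame_proj:
  fixes W :: "'a::euclidean_space set"
  assumes "onf k u" "span (u ` {..<k}) = W"
  shows "orth_proj W y = (\<Sum>i<k. (y \<bullet> u i) *\<^sub>R u i)"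
proof (rule orth_proj_eq)
  show "subspace W" using assms(2) subspace_span by blast
  show "(\<Sum>i<k. (y \<bullet> u i) *\<^sub>R u i) \<in> W" using span_frame_sum[where c="\<lambda>i. y \<bullet> u i" and k=k and u=u] assms(2) by simp
  show "\<forall>v\<in>W. (y - (\<Sum>i<k. (y \<bullet> u i) *\<^sub>R u i)) \<bullet> v = 0"
  proof
    fix v assume "v \<in> W"
    then have "v \<in> span (u ` {..<k})" using assms(2) by simp
    then have "orthogonal (y - (\<Sum>i<k. (y \<bullet> u i) *\<^sub>R u i)) v"
    proof (rule orthogonal_to_span)
      fix x assume "x \<in> u ` {..<k}"
      then obtain j where "j < k" "x = u j" by auto
      then show "orthogonal (y - (\<Sum>i<k. (y \<bullet> u i) *\<^sub>R u i)) x" using sum_onf[OF assms(1) \<open>j<k\<close>]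
        by (simp add: orthogonal_def inner_diff_left)
    qed
    then show "(y - (\<Sum>i<k. (y \<bullet> u i) *\<^sub>R u i)) \<bullet> v = 0" by (simp add: orthogonal_def)
  qed
qed

lemma onf_independent:
  assumes "onf k u"
  shows "independent (u ` {..<k})" "inj_on u {..<k}" "card (u ` {..<k}) = k"
proof -
  show inj: "inj_on u {..<k}"
  proof (rule inj_onI)
    fix i j assume "i \<in> {..<k}" "j \<in> {..<k}" "u i = u j"
    then show "i = j" using assms unfolding onf_def
      by (metis lessThan_iff zero_neq_one)
  qed
  show "independent (u ` {..<k})"
  proof (rule pairwise_orthogonal_independent)
    show "pairwise orthogonal (u ` {..<k})"
      using assms inj unfolding onf_def pairwise_def orthogonal_def by auto
    show "0 \<notin> u ` {..<k}" using assms unfolding onf_def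
      by (metis (no_types, lifting) imageE inner_zero_left lessThan_iff zero_neq_one)
  qed
  show "card (u ` {..<k}) = k" using inj by (simp add: card_image)
qed

lemma onf_dim:
  assumes "onf k u"
  shows "dim (span (u ` {..<k})) = k"
  using onf_independent[OF assms] dim_span_eq_card_independent by metis

subsection \<open>Gram-Schmidt\<close>

fun gs :: "'a::euclidean_space list \<Rightarrow> 'a list \<Rightarrow> 'a list" where
  "gs acc [] = acc"
| "gs acc (w # ws) =
     (let r = w - (\<Sum>i<length acc. (w \<bullet> acc ! i) *\<^sub>R acc ! i)
      in if r = 0 then gs acc ws else gs (acc @ [r /\<^sub>R norm r]) ws)"

lemma gs_step_orth:
  assumes "onf (length acc) (nth acc)" "j < length acc"
  shows "(w - (\<Sum>i<length acc. (w \<bullet> acc ! i) *\<^sub>R acc ! i)) \<bullet> acc ! j = 0"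
  using sum_onf[OF assms] by (simp add: inner_diff_left)

lemma onf_snoc:
  assumes "onf (length acc) (nth acc)" "r \<noteq> 0" "\<forall>j<length acc. r \<bullet> acc ! j = 0"
  shows "onf (length (acc @ [r /\<^sub>R norm r])) (nth (acc @ [r /\<^sub>R norm r]))"
  unfolding onf_def
proof (intro allI impI)
  fix i j assume i: "i < length (acc @ [r /\<^sub>R norm r])" and j: "j < length (acc @ [r /\<^sub>R norm r])"
  have nn: "(r /\<^sub>R norm r) \<bullet> (r /\<^sub>R norm r) = 1"
    using assms(2) by (simp add: dot_square_norm power2_eq_square)
  have o1: "a \<bullet> (r /\<^sub>R norm r) = 0" if "a \<in> set acc" for a
    using assms(3) that by (auto simp: in_set_conv_nth inner_commute)
  show "(acc @ [r /\<^sub>R norm r]) ! i \<bullet> (acc @ [r /\<^sub>R norm r]) ! j = (if i = j then 1 else 0)"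
  proof (cases "i < length acc")
    case True
    then show ?thesis
    proof (cases "j < length acc")
      case True
      then show ?thesis using \<open>i < length acc\<close> assms(1) by (simp add: nth_append onf_def)
    next
      case False
      then have "j = length acc" using j by simp
      then show ?thesis using True o1[of "acc ! i"] by (simp add: nth_append)
    qed
  next
    case False
    then have ii: "i = length acc" using i by simp
    show ?thesis
    proof (cases "j < length acc")
      case True
      then show ?thesis using ii assms(3) by (simp add: nth_append)
    next
      case False
      then have "j = length acc" using j by simp
      then show ?thesis using ii nn by (simp add: nth_append)
    qed
  qed
qed

lemma span_nth_sum:
  "(\<Sum>i<length acc. c i *\<^sub>R acc ! i) \<in> span (set acc)"
  by (intro span_sum span_mul span_base) auto

lemma gs_correct:
  assumes "onf (length acc) (nth acc)"
  shows "onf (length (gs acc ws)) (nth (gs acc ws)) \<and> span (set (gs acc ws)) = span (set acc \<union> set ws)"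
  using assms
proof (induction ws arbitrary: acc)
  case Nil
  then show ?case by simp
next
  case (Cons w ws)
  define s where "s = (\<Sum>i<length acc. (w \<bullet> acc ! i) *\<^sub>R acc ! i)"
  define r where "r = w - s"
  have s_in: "s \<in> span (set acc)" unfolding s_def by (rule span_nth_sum)
  show ?case
  proof (cases "r = 0")
    case True
    then have g: "gs acc (w # ws) = gs acc ws" by (simp add: Let_def r_def s_def)
    have "w \<in> span (set acc \<union> set ws)" using True s_in r_def
      by (metis eq_iff_diff_eq_0 span_mono subsetD sup_ge1)
    then have "span (set acc \<union> set (w # ws)) = span (set acc \<union> set ws)"
      using span_redundant by (metis Un_insert_right list.simps(15))
    then show ?thesis using g Cons by simp
  next
    case False
    let ?a = "acc @ [r /\<^sub>R norm r]"
    have g: "gs acc (w # ws) = gs ?a ws" using False by (simp add: Let_def r_def s_def)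
    have on: "onf (length ?a) (nth ?a)"
      using onf_snoc[OF Cons.prems False] gs_step_orth[OF Cons.prems] by (simp add: r_def s_def)
    have IH: "onf (length (gs ?a ws)) (nth (gs ?a ws)) \<and> span (set (gs ?a ws)) = span (set ?a \<union> set ws)"
      using Cons.IH[OF on] .
    have "span (set ?a \<union> set ws) = span (set acc \<union> set (w # ws))"
    proof (subst span_eq, intro conjI)
      have "r /\<^sub>R norm r \<in> span (set acc \<union> set (w # ws))"
      proof -
        have "w \<in> span (set acc \<union> set (w # ws))" by (intro span_base) simp
        moreover have "s \<in> span (set acc \<union> set (w # ws))" using s_in span_mono[of "set acc"] by blast
        ultimately show ?thesis unfolding r_def by (intro span_mul span_diff)
      qed
      then show "set ?a \<union> set ws \<subseteq> span (set acc \<union> set (w # ws))"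
        by (auto intro: span_base)
      have "w \<in> span (set ?a \<union> set ws)"
      proof -
        have "w = norm r *\<^sub>R (r /\<^sub>R norm r) + s" using False by (simp add: r_def)
        moreover have "r /\<^sub>R norm r \<in> span (set ?a \<union> set ws)" by (intro span_base) simp
        moreover have "s \<in> span (set ?a \<union> set ws)" using s_in span_mono[of "set acc" "set ?a \<union> set ws"] by auto
        ultimately show ?thesis by (metis span_add span_mul)
      qed
      then show "set acc \<union> set (w # ws) \<subseteq> span (set ?a \<union> set ws)"
        by (auto intro: span_base)
    qed
    then show ?thesis using g IH by simp
  qed
qed

lemma gs_length_le: "length (gs acc ws) \<le> length acc + length ws"
proof (induction ws arbitrary: acc)
  case Nil
  then show ?case by simp
next
  case (Cons w ws)
  have 1: "length (gs (acc @ [z]) ws) \<le> length acc + length (w # ws)" for z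
    using Cons.IH[of "acc @ [z]"] by simp
  have 2: "length (gs acc ws) \<le> length acc + length (w # ws)"
    using Cons.IH[of acc] by simp
  show ?case using 1 2 by (simp add: Let_def)
qed

definition padl :: "'a::zero list \<Rightarrow> nat \<Rightarrow> 'a" where
  "padl xs i = (if i < length xs then xs ! i else 0)"

lemma sum_padl:
  assumes "length xs \<le> N"
  shows "(\<Sum>i<length xs. (w \<bullet> xs ! i) *\<^sub>R xs ! i) = (\<Sum>i<N. (w \<bullet> padl xs i) *\<^sub>R padl xs i)"
proof -
  have "(\<Sum>i<N. (w \<bullet> padl xs i) *\<^sub>R padl xs i) = (\<Sum>i<length xs. (w \<bullet> padl xs i) *\<^sub>R padl xs i)"
    by (rule sum.mono_neutral_right) (use assms in \<open>auto simp: padl_def\<close>)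
  also have "\<dots> = (\<Sum>i<length xs. (w \<bullet> xs ! i) *\<^sub>R xs ! i)"
    by (rule sum.cong) (auto simp: padl_def)
  finally show ?thesis by simp
qed

lemma gs_measurable:
  fixes acc :: "'x \<Rightarrow> 'a::euclidean_space list" and ws :: "('x \<Rightarrow> 'a) list"
  assumes "(\<lambda>x. length (acc x)) \<in> measurable M (count_space UNIV)"
    and "\<And>i. (\<lambda>x. padl (acc x) i) \<in> borel_measurable M"
    and "\<forall>x\<in>space M. length (acc x) \<le> N"
    and "\<forall>w\<in>set ws. w \<in> borel_measurable M"
  shows "(\<lambda>x. length (gs (acc x) (map (\<lambda>w. w x) ws))) \<in> measurable M (count_space UNIV) \<and>
    (\<forall>i. (\<lambda>x. padl (gs (acc x) (map (\<lambda>w. w x) ws)) i) \<in> borel_measurable M)"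
  using assms
proof (induction ws arbitrary: acc N)
  case Nil
  then show ?case by simp
next
  case (Cons w ws)
  note len = Cons.prems(1)
  have w[measurable]: "w \<in> borel_measurable M" using Cons.prems(4) by simp
  have pad[measurable]: "(\<lambda>x. padl (acc x) i) \<in> borel_measurable M" for i using Cons.prems(2) .
  define r where "r x = w x - (\<Sum>i<N. (w x \<bullet> padl (acc x) i) *\<^sub>R padl (acc x) i)" for x
  have r[measurable]: "r \<in> borel_measurable M" unfolding r_def by measurable
  have r_eq: "r x = w x - (\<Sum>i<length (acc x). (w x \<bullet> acc x ! i) *\<^sub>R acc x ! i)" if "x \<in> space M" for x
    unfolding r_def using sum_padl[of "acc x" N] Cons.prems(3) that by simp
  define acc' where "acc' x = (if r x = 0 then acc x else acc x @ [r x /\<^sub>R norm (r x)])" for x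
  have g: "gs (acc x) (map (\<lambda>w. w x) (w # ws)) = gs (acc' x) (map (\<lambda>w. w x) ws)" if "x \<in> space M" for x
    using r_eq[OF that] by (simp add: Let_def acc'_def)
  have Z: "{x \<in> space M. r x = 0} \<in> sets M"
  proof -
    have "r -` {0} \<inter> space M \<in> sets M" by (rule measurable_sets[OF r]) simp
    moreover have "{x \<in> space M. r x = 0} = r -` {0} \<inter> space M" by auto
    ultimately show ?thesis by simp
  qed
  have lsets: "{x \<in> space M. P (length (acc x))} \<in> sets M" for P
  proof -
    have "(\<lambda>x. length (acc x)) -` {n. P n} \<inter> space M \<in> sets M" by (rule measurable_sets[OF len]) simp
    moreover have "{x \<in> space M. P (length (acc x))} = (\<lambda>x. length (acc x)) -` {n. P n} \<inter> space M" by auto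
    ultimately show ?thesis by simp
  qed
  have len': "(\<lambda>x. length (acc' x)) \<in> measurable M (count_space UNIV)"
  proof -
    have "(\<lambda>x. if r x = 0 then length (acc x) else Suc (length (acc x))) \<in> measurable M (count_space UNIV)"
      by (intro measurable_If Z len measurable_compose[OF len]) simp
    moreover have "(\<lambda>x. length (acc' x)) = (\<lambda>x. if r x = 0 then length (acc x) else Suc (length (acc x)))"
      by (auto simp: acc'_def fun_eq_iff)
    ultimately show ?thesis by simp
  qed
  have pad': "(\<lambda>x. padl (acc' x) i) \<in> borel_measurable M" for i
  proof -
    have "(\<lambda>x. if i < length (acc x) then padl (acc x) i else
             if i = length (acc x) \<and> r x \<noteq> 0 then r x /\<^sub>R norm (r x) else 0) \<in> borel_measurable M"
    proof (intro measurable_If)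
      show "{x \<in> space M. i < length (acc x)} \<in> sets M" by (rule lsets)
      have "{x \<in> space M. i = length (acc x) \<and> r x \<noteq> 0} = {x \<in> space M. i = length (acc x)} - {x \<in> space M. r x = 0}"
        by auto
      then show "{x \<in> space M. i = length (acc x) \<and> r x \<noteq> 0} \<in> sets M"
        using lsets Z by auto
    qed measurable
    moreover have "padl (acc' x) i = (if i < length (acc x) then padl (acc x) i else
             if i = length (acc x) \<and> r x \<noteq> 0 then r x /\<^sub>R norm (r x) else 0)" for x
      by (auto simp: acc'_def padl_def nth_append)
    ultimately show ?thesis by simp
  qed
  have bound: "\<forall>x\<in>space M. length (acc' x) \<le> Suc N" using Cons.prems(3) by (auto simp: acc'_def)
  have IH: "(\<lambda>x. length (gs (acc' x) (map (\<lambda>w. w x) ws))) \<in> measurable M (count_space UNIV) \<and>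
    (\<forall>i. (\<lambda>x. padl (gs (acc' x) (map (\<lambda>w. w x) ws)) i) \<in> borel_measurable M)"
    using Cons.IH[OF len' pad' bound] Cons.prems(4) by simp
  show ?case
  proof (intro conjI allI)
    have "(\<lambda>x. length (gs (acc x) (map (\<lambda>w. w x) (w # ws)))) \<in> measurable M (count_space UNIV) \<longleftrightarrow>
          (\<lambda>x. length (gs (acc' x) (map (\<lambda>w. w x) ws))) \<in> measurable M (count_space UNIV)"
      by (rule measurable_cong) (simp only: g)
    then show "(\<lambda>x. length (gs (acc x) (map (\<lambda>w. w x) (w # ws)))) \<in> measurable M (count_space UNIV)"
      using IH by simp
    fix i
    have "(\<lambda>x. padl (gs (acc x) (map (\<lambda>w. w x) (w # ws))) i) \<in> borel_measurable M \<longleftrightarrow>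
          (\<lambda>x. padl (gs (acc' x) (map (\<lambda>w. w x) ws)) i) \<in> borel_measurable M"
      by (rule measurable_cong) (simp only: g)
    then show "(\<lambda>x. padl (gs (acc x) (map (\<lambda>w. w x) (w # ws))) i) \<in> borel_measurable M"
      using IH by simp
  qed
qed





subsection \<open>Grassmannian measurability\<close>

lemma grass_gen: "{U. grass_open k U} \<subseteq> Pow (grassmannian k :: 'a::euclidean_space set set)"
  by (auto simp: grass_open_def)

lemma grass_sets: "sets (grass_borel k :: 'a::euclidean_space set measure) = sigma_sets (grassmannian k) {U. grass_open k U}"
  unfolding grass_borel_def by (rule sets_measure_of[OF grass_gen])

lemma grass_space: "space (grass_borel k :: 'a::euclidean_space set measure) = grassmannian k"
  unfolding grass_borel_def by (rule space_measure_of[OF grass_gen])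

lemma grass_open_proj:
  fixes S :: "'a::euclidean_space set"
  assumes "open S"
  shows "grass_open k {W \<in> (grassmannian k :: 'a set set). orth_proj W y \<in> S}"
  unfolding grass_open_def
proof (intro conjI ballI)
  show "{W \<in> (grassmannian k :: 'a set set). orth_proj W y \<in> S} \<subseteq> grassmannian k" by auto
  fix W assume W: "W \<in> {W \<in> (grassmannian k :: 'a set set). orth_proj W y \<in> S}"
  then obtain e where e: "e > 0" "ball (orth_proj W y) e \<subseteq> S"
    using assms open_contains_ball by blast
  have ny: "0 < norm y + 1" using norm_ge_zero[of y] by linarith
  define e' where "e' = e / (norm y + 1)"
  have "e' > 0" using e ny by (simp add: e'_def)
  have e'y: "e' * norm y < e" unfolding e'_def using e(1) ny by (simp add: field_simps)
  show "\<exists>e>0. \<forall>W'\<in>grassmannian k. grass_dist W W' < e \<longrightarrow> W' \<in> {W \<in> grassmannian k. orth_proj W y \<in> S}"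
  proof (intro exI[of _ e'] conjI ballI impI)
    show "e' > 0" by fact
    fix W' assume W': "W' \<in> grassmannian k" "grass_dist W W' < e'"
    have sW: "subspace W" "subspace W'" using W W' by (auto simp: grassmannian_def)
    have "norm (orth_proj W y - orth_proj W' y) \<le> grass_dist W W' * norm y"
      by (rule orth_proj_diff_le[OF sW])
    also have "\<dots> \<le> e' * norm y" using W'(2) by (intro mult_right_mono) auto
    also have "\<dots> < e" by (rule e'y)
    finally have "dist (orth_proj W y) (orth_proj W' y) < e" by (simp add: dist_norm)
    then show "W' \<in> {W \<in> grassmannian k. orth_proj W y \<in> S}" using e(2) W' by auto
  qed
qed

lemma proj_measurable:
  fixes V :: "'x \<Rightarrow> 'a::euclidean_space set"
  assumes "V \<in> measurable N (grass_borel k)"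
  shows "(\<lambda>x. orth_proj (V x) y) \<in> borel_measurable N"
proof (rule borel_measurableI)
  fix S :: "'a set" assume "open S"
  let ?U = "{W \<in> grassmannian k. orth_proj W y \<in> S}"
  have "?U \<in> sets (grass_borel k)" unfolding grass_sets
    by (rule sigma_sets.Basic) (simp add: grass_open_proj[OF \<open>open S\<close>, of k y])
  then have "V -` ?U \<inter> space N \<in> sets N" by (rule measurable_sets[OF assms])
  moreover have "V -` ?U \<inter> space N = (\<lambda>x. orth_proj (V x) y) -` S \<inter> space N"
    using measurable_space[OF assms] by (auto simp: grass_space)
  ultimately show "(\<lambda>x. orth_proj (V x) y) -` S \<inter> space N \<in> sets N" by simp
qed

lemma span_proj_basis:
  fixes W :: "'a::euclidean_space set"
  assumes "subspace W"
  shows "span (orth_proj W ` Basis) = W"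
proof
  show "span (orth_proj W ` Basis) \<subseteq> W"
    using orth_proj(1)[OF assms] by (intro span_minimal) (auto simp: assms)
  show "W \<subseteq> span (orth_proj W ` Basis)"
  proof
    fix v assume "v \<in> W"
    have lin: "linear (orth_proj W)" by (rule linear_orth_proj[OF assms])
    have "orth_proj W v = v" by (rule orth_proj_eq) (auto simp: assms \<open>v \<in> W\<close>)
    moreover have "orth_proj W v = orth_proj W (\<Sum>b\<in>Basis. (v \<bullet> b) *\<^sub>R b)"
      by (simp add: euclidean_representation)
    moreover have "\<dots> = (\<Sum>b\<in>Basis. (v \<bullet> b) *\<^sub>R orth_proj W b)"
      using lin by (simp add: linear_sum linear_scale comp_def)
    moreover have "(\<Sum>b\<in>Basis. (v \<bullet> b) *\<^sub>R orth_proj W b) \<in> span (orth_proj W ` Basis)"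
      by (intro span_sum span_mul span_base) auto
    ultimately show "v \<in> span (orth_proj W ` Basis)" by simp
  qed
qed



lemma dir12:
  fixes M :: "'x measure" and V :: "'x \<Rightarrow> 'a::euclidean_space set"
  assumes "\<forall>x\<in>space M. V x \<in> grassmannian k" "X1 \<in> sets M"
    "V \<in> measurable (restrict_space M X1) (grass_borel k)"
  shows "\<exists>v :: nat \<Rightarrow> 'x \<Rightarrow> 'a.
            (\<forall>i<k. v i \<in> borel_measurable (restrict_space M X1)) \<and>
            (\<forall>x\<in>X1. (\<forall>i<k. norm (v i x) = 1) \<and>
                     (\<forall>i<k. \<forall>j<k. i \<noteq> j \<longrightarrow> v i x \<bullet> v j x = 0) \<and>
                     span {v i x | i. i < k} = V x)"
proof -
  obtain bs where bs: "set bs = (Basis::'a set)" "distinct bs"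
    using finite_distinct_list[OF finite_Basis] by blast
  let ?N = "restrict_space M X1"
  define L where "L x = gs [] (map (\<lambda>b. orth_proj (V x) b) bs)" for x
  have meas: "\<forall>i. (\<lambda>x. padl (L x) i) \<in> borel_measurable ?N"
  proof -
    have "(\<lambda>x. length (gs [] (map (\<lambda>w. w x) (map (\<lambda>b x. orth_proj (V x) b) bs)))) \<in> measurable ?N (count_space UNIV) \<and>
      (\<forall>i. (\<lambda>x. padl (gs [] (map (\<lambda>w. w x) (map (\<lambda>b x. orth_proj (V x) b) bs))) i) \<in> borel_measurable ?N)"
      by (rule gs_measurable[where N=0]) (auto simp: padl_def intro: proj_measurable[OF assms(3)])
    then show ?thesis by (simp add: L_def comp_def)
  qed
  have props: "onf (length (L x)) (nth (L x)) \<and> span (set (L x)) = V x \<and> length (L x) = k"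
    if "x \<in> X1" for x
  proof -
    have Vx: "V x \<in> grassmannian k" using assms(1,2) that sets.sets_into_space by blast
    then have sub: "subspace (V x)" "dim (V x) = k" by (auto simp: grassmannian_def)
    have c: "onf (length (L x)) (nth (L x)) \<and> span (set (L x)) = span (set [] \<union> set (map (\<lambda>b. orth_proj (V x) b) bs))"
      unfolding L_def by (rule gs_correct) (simp add: onf_def)
    have sp: "span (set (L x)) = V x" using c span_proj_basis[OF sub(1)] bs by simp
    have st: "set (L x) = nth (L x) ` {..<length (L x)}" by (auto simp: in_set_conv_nth)
    have d1: "dim (span (set (L x))) = length (L x)" using onf_dim[OF conjunct1[OF c]] st by simp
    then show ?thesis using c sp sub(2) by metis
  qed
  define v where "v i x = padl (L x) i" for i x
  have vx: "v i x = L x ! i" if "x \<in> X1" "i < k" for i x using props[OF that(1)] that by (simp add: v_def padl_def)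
  show ?thesis
  proof (intro exI[of _ v] conjI allI impI ballI)
    fix i assume "i < k" show "v i \<in> borel_measurable ?N" using meas by (simp add: v_def[abs_def])
  next
    fix x i assume x: "x \<in> X1" and i: "i < k"
    show "norm (v i x) = 1" using props[OF x] vx[OF x i] i by (simp add: onf_def norm_eq_1)
  next
    fix x i j assume x: "x \<in> X1" and i: "i < k" and j: "j < k" and ij: "i \<noteq> j"
    show "v i x \<bullet> v j x = 0" using props[OF x] vx[OF x i] vx[OF x j] i j ij by (simp add: onf_def)
  next
    fix x assume x: "x \<in> X1"
    have "{v i x |i. i < k} = (\<lambda>i. v i x) ` {..<k}" by auto
    also have "\<dots> = (\<lambda>i. L x ! i) ` {..<k}" by (rule image_cong) (auto simp: vx[OF x])
    also have "\<dots> = set (L x)" using props[OF x] by (auto simp: in_set_conv_nth)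
    finally show "span {v i x |i. i < k} = V x" using props[OF x] by simp
  qed
qed



lemma grass_dist_less:
  fixes W W' :: "'a::euclidean_space set"
  assumes "subspace W" "subspace W'" "set bs = Basis"
    "\<forall>n<length bs. dist (orth_proj W' (bs!n)) (orth_proj W (bs!n)) < \<delta>"
  shows "grass_dist W W' < real DIM('a) * \<delta>"
proof -
  let ?L = "\<lambda>x. orth_proj W x - orth_proj W' x"
  have lin: "linear ?L" using linear_orth_proj assms(1,2) by (intro linear_compose_sub) auto
  have bnd: "norm (?L b) < \<delta>" if "b \<in> Basis" for b
  proof -
    have "b \<in> set bs" using that assms(3) by simp
    then obtain n where "n < length bs" "b = bs ! n" by (metis in_set_conv_nth)
    then show ?thesis using assms(4) by (simp add: dist_norm norm_minus_commute)
  qed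
  have "onorm ?L \<le> (\<Sum>b\<in>Basis. norm (?L b))"
  proof (rule onorm_le)
    fix y
    have "?L y = ?L (\<Sum>b\<in>Basis. (y \<bullet> b) *\<^sub>R b)" by (simp add: euclidean_representation)
    also have "\<dots> = (\<Sum>b\<in>Basis. (y \<bullet> b) *\<^sub>R ?L b)"
      using linear_orth_proj[OF assms(1)] linear_orth_proj[OF assms(2)]
      by (simp add: linear_sum linear_scale comp_def scaleR_diff_right sum_subtractf)
    finally have "norm (?L y) \<le> (\<Sum>b\<in>Basis. norm ((y \<bullet> b) *\<^sub>R ?L b))" by (metis norm_sum)
    also have "\<dots> \<le> (\<Sum>b\<in>Basis. norm y * norm (?L b))"
    proof (intro sum_mono)
      fix b :: 'a assume "b \<in> Basis"
      show "norm ((y \<bullet> b) *\<^sub>R ?L b) \<le> norm y * norm (?L b)"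
        using mult_right_mono[OF Basis_le_norm[OF \<open>b \<in> Basis\<close>, of y] norm_ge_zero[of "?L b"]] by simp
    qed
    also have "\<dots> = (\<Sum>b\<in>Basis. norm (?L b)) * norm y"
      by (metis (no_types) mult.commute sum_distrib_left)
    finally show "norm (?L y) \<le> (\<Sum>b\<in>Basis. norm (?L b)) * norm y" .
  qed
  also have "(\<Sum>b\<in>Basis. norm (?L b)) < (\<Sum>b\<in>(Basis::'a set). \<delta>)"
    by (rule sum_strict_mono) (use bnd in auto)
  also have "\<dots> = real DIM('a) * \<delta>" by simp
  finally show ?thesis unfolding grass_dist_def .
qed



lemma dir21:
  fixes M :: "'x measure" and V :: "'x \<Rightarrow> 'a::euclidean_space set" and v :: "nat \<Rightarrow> 'x \<Rightarrow> 'a"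
  assumes "\<forall>x\<in>space M. V x \<in> grassmannian k" "X2 \<in> sets M"
    "\<forall>i<k. v i \<in> borel_measurable (restrict_space M X2)"
    "\<forall>x\<in>X2. (\<forall>i<k. norm (v i x) = 1) \<and>
                     (\<forall>i<k. \<forall>j<k. i \<noteq> j \<longrightarrow> v i x \<bullet> v j x = 0) \<and>
                     span {v i x | i. i < k} = V x"
  shows "V \<in> measurable (restrict_space M X2) (grass_borel k)"
proof -
  let ?N = "restrict_space M X2"
  have spN: "space ?N = X2" using assms(2) by simp
  obtain bs where bs: "set bs = (Basis::'a set)" "distinct bs"
    using finite_distinct_list[OF finite_Basis] by blast
  have Vg: "V x \<in> grassmannian k" if "x \<in> X2" for x
    using assms(1,2) that sets.sets_into_space by blast
  have on: "onf k (\<lambda>i. v i x)" and sp: "span ((\<lambda>i. v i x) ` {..<k}) = V x" if "x \<in> X2" for x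
  proof -
    show "onf k (\<lambda>i. v i x)" using assms(4) that by (simp add: onf_iff)
    have "{v i x | i. i < k} = (\<lambda>i. v i x) ` {..<k}" by auto
    moreover have "span {v i x | i. i < k} = V x" using assms(4) that by blast
    ultimately show "span ((\<lambda>i. v i x) ` {..<k}) = V x" by metis
  qed
  define Q where "Q x = (\<lambda>n. orth_proj (V x) (bs ! n))" for x
  have Qm: "Q \<in> borel_measurable ?N"
  proof (rule measurable_coordinatewise_then_product)
    fix n
    have "(\<lambda>x. \<Sum>i<k. (bs ! n \<bullet> v i x) *\<^sub>R v i x) \<in> borel_measurable ?N"
      using assms(3) by (auto intro!: borel_measurable_sum borel_measurable_scaleR borel_measurable_inner)
    moreover have "(\<lambda>x. \<Sum>i<k. (bs ! n \<bullet> v i x) *\<^sub>R v i x) \<in> borel_measurable ?N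
        \<longleftrightarrow> (\<lambda>x. Q x n) \<in> borel_measurable ?N"
      by (rule measurable_cong) (simp add: Q_def spN frame_proj[OF on sp])
    ultimately show "(\<lambda>x. Q x n) \<in> borel_measurable ?N" by simp
  qed
  have dpos: "real DIM('a) > 0" by simp
  show ?thesis unfolding grass_borel_def
  proof (rule measurable_measure_of)
    show "{U. grass_open k U} \<subseteq> Pow (grassmannian k)" by (auto simp: grass_open_def)
    show "V \<in> space ?N \<rightarrow> grassmannian k" using spN Vg by auto
    fix U :: "'a set set" assume "U \<in> {U. grass_open k U}"
    then have U: "grass_open k U" by simp
    define d where "d = real DIM('a)"
    have dpos: "d > 0" by (simp add: d_def)
    define Op where "Op = {q. \<exists>W\<in>U. \<exists>e>0. (\<forall>W'\<in>grassmannian k. grass_dist W W' < e \<longrightarrow> W' \<in> U) \<and>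
                        (\<forall>n<length bs. dist (q n) (orth_proj W (bs!n)) < e / d)}"
    have "open Op"
    proof (rule Topological_Spaces.openI)
      fix q assume "q \<in> Op"
      then obtain W e where We: "W \<in> U" "e > 0" "\<forall>W'\<in>grassmannian k. grass_dist W W' < e \<longrightarrow> W' \<in> U"
        "\<forall>n<length bs. dist (q n) (orth_proj W (bs!n)) < e / d"
        unfolding Op_def by blast
      let ?T = "\<Inter>n\<in>{..<length bs}. (\<lambda>q. q n) -` ball (orth_proj W (bs!n)) (e / d)"
      have "open ?T"
        by (intro open_INT finite_lessThan ballI open_vimage open_ball continuous_on_product_coordinates)
      moreover have "q \<in> ?T" using We(4) by (auto simp: dist_commute)
      moreover have "?T \<subseteq> Op"
      proof
        fix q' assume "q' \<in> ?T"
        then have "\<forall>n<length bs. dist (q' n) (orth_proj W (bs!n)) < e / d" by (auto simp: dist_commute)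
        then show "q' \<in> Op" unfolding Op_def using We(1-3) by blast
      qed
      ultimately show "\<exists>T. open T \<and> q \<in> T \<and> T \<subseteq> Op" by blast
    qed
    have key: "V x \<in> U \<longleftrightarrow> Q x \<in> Op" if x: "x \<in> X2" for x
    proof
      assume "V x \<in> U"
      then obtain e where e: "e > 0" "\<forall>W'\<in>grassmannian k. grass_dist (V x) W' < e \<longrightarrow> W' \<in> U"
        using U unfolding grass_open_def by blast
      have "e / d > 0" using e dpos by simp
      then have "\<forall>n<length bs. dist (Q x n) (orth_proj (V x) (bs!n)) < e / d" by (simp add: Q_def)
      then show "Q x \<in> Op" unfolding Op_def using \<open>V x \<in> U\<close> e by blast
    next
      assume "Q x \<in> Op"
      then obtain W e where We: "W \<in> U" "e > 0" "\<forall>W'\<in>grassmannian k. grass_dist W W' < e \<longrightarrow> W' \<in> U"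
        "\<forall>n<length bs. dist (Q x n) (orth_proj W (bs!n)) < e / d"
        unfolding Op_def by blast
      have "W \<in> grassmannian k" using U We(1) unfolding grass_open_def by blast
      then have "grass_dist W (V x) < d * (e / d)"
        unfolding d_def
        by (intro grass_dist_less[OF _ _ bs(1)]) (use Vg[OF x] We(4) in \<open>auto simp: grassmannian_def Q_def d_def\<close>)
      then have "grass_dist W (V x) < e" using dpos by simp
      then show "V x \<in> U" using We(3) Vg[OF x] by blast
    qed
    have "V -` U \<inter> space ?N = Q -` Op \<inter> space ?N" using key spN by auto
    moreover have "Q -` Op \<inter> space ?N \<in> sets ?N"
      by (rule measurable_sets[OF Qm]) (simp add: borel_open \<open>open Op\<close>)
    ultimately show "V -` U \<inter> space ?N \<in> sets ?N" by simp
  qed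
qed




lemma dir23:
  fixes M :: "'x measure" and V :: "'x \<Rightarrow> 'a::euclidean_space set" and v :: "nat \<Rightarrow> 'x \<Rightarrow> 'a"
  assumes "\<forall>x\<in>space M. V x \<in> grassmannian k" "X \<in> sets M"
    "\<forall>i<k. v i \<in> borel_measurable (restrict_space M X)"
    "\<forall>x\<in>X. (\<forall>i<k. norm (v i x) = 1) \<and>
                     (\<forall>i<k. \<forall>j<k. i \<noteq> j \<longrightarrow> v i x \<bullet> v j x = 0) \<and>
                     span {v i x | i. i < k} = V x"
  shows "\<exists>\<Lambda> :: 'x \<times> 'a \<Rightarrow> 'x \<times> (nat \<Rightarrow> real).
            bij_betw \<Lambda> {(x, u). x \<in> X \<and> u \<in> V x} (X \<times> Rk k) \<and>
            \<Lambda> \<in> measurable (restrict_space (M \<Otimes>\<^sub>M (borel :: 'a measure)) {(x, u). x \<in> X \<and> u \<in> V x})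
                          (restrict_space (M \<Otimes>\<^sub>M Rk_borel k) (X \<times> Rk k)) \<and>
            the_inv_into {(x, u). x \<in> X \<and> u \<in> V x} \<Lambda> \<in>
              measurable (restrict_space (M \<Otimes>\<^sub>M Rk_borel k) (X \<times> Rk k))
                         (restrict_space (M \<Otimes>\<^sub>M (borel :: 'a measure)) {(x, u). x \<in> X \<and> u \<in> V x}) \<and>
            (\<forall>x\<in>X. \<forall>u\<in>V x. fst (\<Lambda> (x, u)) = x) \<and>
            (\<forall>x\<in>X.
               bij_betw (\<lambda>u. snd (\<Lambda> (x, u))) (V x) (Rk k) \<and>
               (\<forall>u\<in>V x. \<forall>w\<in>V x. \<forall>i<k.
                  snd (\<Lambda> (x, u + w)) i = snd (\<Lambda> (x, u)) i + snd (\<Lambda> (x, w)) i) \<and>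
               (\<forall>u\<in>V x. \<forall>c::real. \<forall>i<k.
                  snd (\<Lambda> (x, c *\<^sub>R u)) i = c * snd (\<Lambda> (x, u)) i) \<and>
               (\<forall>u\<in>V x. (\<Sum>i<k. (snd (\<Lambda> (x, u)) i)\<^sup>2) = (norm u)\<^sup>2))"
proof -
  let ?G = "{(x, u). x \<in> X \<and> u \<in> V x}"
  have XM: "X \<subseteq> space M" using assms(2) sets.sets_into_space by blast
  have on: "onf k (\<lambda>i. v i x)" and sp: "span ((\<lambda>i. v i x) ` {..<k}) = V x" if "x \<in> X" for x
  proof -
    show "onf k (\<lambda>i. v i x)" using assms(4) that by (simp add: onf_iff)
    have "{v i x | i. i < k} = (\<lambda>i. v i x) ` {..<k}" by auto
    moreover have "span {v i x | i. i < k} = V x" using assms(4) that by blast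
    ultimately show "span ((\<lambda>i. v i x) ` {..<k}) = V x" by metis
  qed
  have F1: "u = (\<Sum>i<k. (u \<bullet> v i x) *\<^sub>R v i x)" if "x \<in> X" "u \<in> V x" for x u
  proof -
    have "subspace (V x)" using sp[OF that(1)] subspace_span by metis
    then have "orth_proj (V x) u = u"
      by (rule orth_proj_eq) (use that(2) in auto)
    then show ?thesis using frame_proj[OF on[OF that(1)] sp[OF that(1)], of u] by metis
  qed
  have F2: "(\<Sum>i<k. c i *\<^sub>R v i x) \<in> V x" if "x \<in> X" for x c
    using span_frame_sum[where c=c and k=k and u="\<lambda>i. v i x"] sp[OF that] by simp
  have F3: "(\<Sum>i<k. c i *\<^sub>R v i x) \<bullet> v j x = c j" if "x \<in> X" "j < k" for x c j
    by (rule sum_onf[OF on[OF that(1)] that(2)])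
  define T where "T x u = (\<lambda>i. if i < k then u \<bullet> v i x else undefined)" for x u
  define S where "S x c = (\<Sum>i<k. c i *\<^sub>R v i x)" for x c
  define \<Lambda> where "\<Lambda> p = (fst p, T (fst p) (snd p))" for p
  define \<Psi> where "\<Psi> p = (fst p, S (fst p) (snd p))" for p
  have T_Rk: "T x u \<in> Rk k" for x u by (simp add: T_def Rk_def PiE_iff extensional_def)
  have ST: "S x (T x u) = u" if "x \<in> X" "u \<in> V x" for x u
  proof -
    have "S x (T x u) = (\<Sum>i<k. (u \<bullet> v i x) *\<^sub>R v i x)"
      unfolding S_def T_def by (rule sum.cong) auto
    then show ?thesis using F1[OF that] by metis
  qed
  have TS: "T x (S x c) = c" if "x \<in> X" "c \<in> Rk k" for x c
  proof
    fix i show "T x (S x c) i = c i"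
      using that F3[OF that(1)] by (auto simp: T_def S_def Rk_def PiE_iff extensional_def)
  qed
  have S_V: "S x c \<in> V x" if "x \<in> X" for x c using F2[OF that] by (simp add: S_def)
  have bij: "bij_betw \<Lambda> ?G (X \<times> Rk k)"
    by (rule bij_betw_byWitness[where f'=\<Psi>]) (auto simp: \<Lambda>_def \<Psi>_def ST TS T_Rk S_V)
  have inv: "the_inv_into ?G \<Lambda> p = \<Psi> p" if "p \<in> X \<times> Rk k" for p
    by (rule the_inv_into_f_eq[OF bij_betw_imp_inj_on[OF bij]])
       (use that in \<open>auto simp: \<Lambda>_def \<Psi>_def ST TS S_V\<close>)
  have spG: "space (restrict_space (M \<Otimes>\<^sub>M (borel :: 'a measure)) ?G) = ?G"
    using XM by (auto simp: space_restrict_space space_pair_measure)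
  have spR: "space (restrict_space (M \<Otimes>\<^sub>M Rk_borel k) (X \<times> Rk k)) = X \<times> Rk k"
    using XM by (auto simp: space_restrict_space space_pair_measure Rk_borel_def space_PiM Rk_def)
  have fstG: "fst \<in> measurable (restrict_space (M \<Otimes>\<^sub>M (borel :: 'a measure)) ?G) (restrict_space M X)"
    by (rule measurable_restrict_space3[OF measurable_fst]) auto
  have fstR: "fst \<in> measurable (restrict_space (M \<Otimes>\<^sub>M Rk_borel k) (X \<times> Rk k)) (restrict_space M X)"
    by (rule measurable_restrict_space3[OF measurable_fst]) auto
  have vG: "(\<lambda>p. v i (fst p)) \<in> borel_measurable (restrict_space (M \<Otimes>\<^sub>M (borel :: 'a measure)) ?G)" if "i < k" for i
    using measurable_compose[OF fstG] assms(3) that by blast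
  have vR: "(\<lambda>p. v i (fst p)) \<in> borel_measurable (restrict_space (M \<Otimes>\<^sub>M Rk_borel k) (X \<times> Rk k))" if "i < k" for i
    using measurable_compose[OF fstR] assms(3) that by blast
  have sndG: "snd \<in> borel_measurable (restrict_space (M \<Otimes>\<^sub>M (borel :: 'a measure)) ?G)"
    by (rule measurable_restrict_space1[OF measurable_snd])
  have sndR: "snd \<in> measurable (restrict_space (M \<Otimes>\<^sub>M Rk_borel k) (X \<times> Rk k)) (Rk_borel k)"
    by (rule measurable_restrict_space1[OF measurable_snd])
  have compR: "(\<lambda>p. snd p i) \<in> borel_measurable (restrict_space (M \<Otimes>\<^sub>M Rk_borel k) (X \<times> Rk k))" if "i < k" for i
  proof -
    have "(\<lambda>x. x i) \<in> measurable (Rk_borel k) borel"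
      unfolding Rk_borel_def using that by (intro measurable_component_singleton) auto
    from measurable_compose[OF sndR this] show ?thesis .
  qed
  have mL: "\<Lambda> \<in> measurable (restrict_space (M \<Otimes>\<^sub>M (borel :: 'a measure)) ?G)
                          (restrict_space (M \<Otimes>\<^sub>M Rk_borel k) (X \<times> Rk k))"
  proof (rule measurable_restrict_space2)
    show "\<Lambda> \<in> space (restrict_space (M \<Otimes>\<^sub>M borel) ?G) \<rightarrow> X \<times> Rk k"
      using spG by (auto simp: \<Lambda>_def T_Rk)
    show "\<Lambda> \<in> measurable (restrict_space (M \<Otimes>\<^sub>M borel) ?G) (M \<Otimes>\<^sub>M Rk_borel k)"
      unfolding \<Lambda>_def
    proof (rule measurable_Pair)
      show "fst \<in> measurable (restrict_space (M \<Otimes>\<^sub>M borel) ?G) M"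
        by (rule measurable_restrict_space1[OF measurable_fst])
      have "(\<lambda>p i. if i < k then snd p \<bullet> v i (fst p) else undefined) \<in> measurable (restrict_space (M \<Otimes>\<^sub>M borel) ?G) (Rk_borel k)"
        unfolding Rk_borel_def
      proof (rule measurable_PiM_single')
        fix i assume "i \<in> {..<k}"
        then have "(\<lambda>p. snd p \<bullet> v i (fst p)) \<in> borel_measurable (restrict_space (M \<Otimes>\<^sub>M borel) ?G)"
          using borel_measurable_inner[OF sndG vG] by simp
        then show "(\<lambda>p. if i < k then snd p \<bullet> v i (fst p) else undefined) \<in> borel_measurable (restrict_space (M \<Otimes>\<^sub>M borel) ?G)"
          using \<open>i \<in> {..<k}\<close> by simp
      qed (auto simp: PiE_iff extensional_def)
      then show "(\<lambda>p. T (fst p) (snd p)) \<in> measurable (restrict_space (M \<Otimes>\<^sub>M borel) ?G) (Rk_borel k)"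
        by (simp add: T_def)
    qed
  qed
  have mP: "\<Psi> \<in> measurable (restrict_space (M \<Otimes>\<^sub>M Rk_borel k) (X \<times> Rk k))
                          (restrict_space (M \<Otimes>\<^sub>M (borel :: 'a measure)) ?G)"
  proof (rule measurable_restrict_space2)
    show "\<Psi> \<in> space (restrict_space (M \<Otimes>\<^sub>M Rk_borel k) (X \<times> Rk k)) \<rightarrow> ?G"
      using spR by (auto simp: \<Psi>_def S_V)
    show "\<Psi> \<in> measurable (restrict_space (M \<Otimes>\<^sub>M Rk_borel k) (X \<times> Rk k)) (M \<Otimes>\<^sub>M borel)"
      unfolding \<Psi>_def
    proof (rule measurable_Pair)
      show "fst \<in> measurable (restrict_space (M \<Otimes>\<^sub>M Rk_borel k) (X \<times> Rk k)) M"
        by (rule measurable_restrict_space1[OF measurable_fst])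
      show "(\<lambda>p. S (fst p) (snd p)) \<in> borel_measurable (restrict_space (M \<Otimes>\<^sub>M Rk_borel k) (X \<times> Rk k))"
        unfolding S_def
        by (intro borel_measurable_sum borel_measurable_scaleR compR vR) auto
    qed
  qed
  have mI: "the_inv_into ?G \<Lambda> \<in> measurable (restrict_space (M \<Otimes>\<^sub>M Rk_borel k) (X \<times> Rk k))
                         (restrict_space (M \<Otimes>\<^sub>M (borel :: 'a measure)) ?G)"
    using mP by (subst measurable_cong[where g=\<Psi>]) (auto simp: spR inv)
  show ?thesis
  proof (intro exI[of _ \<Lambda>] conjI ballI allI impI)
    show "bij_betw \<Lambda> ?G (X \<times> Rk k)" by (rule bij)
    show "\<Lambda> \<in> measurable (restrict_space (M \<Otimes>\<^sub>M borel) ?G) (restrict_space (M \<Otimes>\<^sub>M Rk_borel k) (X \<times> Rk k))"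
      by (rule mL)
    show "the_inv_into ?G \<Lambda> \<in> measurable (restrict_space (M \<Otimes>\<^sub>M Rk_borel k) (X \<times> Rk k)) (restrict_space (M \<Otimes>\<^sub>M borel) ?G)"
      by (rule mI)
    fix x assume x: "x \<in> X"
    show "fst (\<Lambda> (x, u)) = x" for u by (simp add: \<Lambda>_def)
    show "bij_betw (\<lambda>u. snd (\<Lambda> (x, u))) (V x) (Rk k)"
      by (rule bij_betw_byWitness[where f'="S x"]) (auto simp: \<Lambda>_def ST TS T_Rk S_V x)
    show "snd (\<Lambda> (x, u + w)) i = snd (\<Lambda> (x, u)) i + snd (\<Lambda> (x, w)) i" if "i < k" for u w i
      using that by (simp add: \<Lambda>_def T_def inner_add_left)
    show "snd (\<Lambda> (x, c *\<^sub>R u)) i = c * snd (\<Lambda> (x, u)) i" if "i < k" for u c i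
      using that by (simp add: \<Lambda>_def T_def)
    fix u assume u: "u \<in> V x"
    have "(norm u)\<^sup>2 = u \<bullet> u" by (simp add: dot_square_norm)
    also have "\<dots> = u \<bullet> (\<Sum>i<k. (u \<bullet> v i x) *\<^sub>R v i x)" by (rule arg_cong[where f="\<lambda>z. u \<bullet> z", OF F1[OF x u]])
    also have "\<dots> = (\<Sum>i<k. (u \<bullet> v i x)\<^sup>2)" by (simp add: inner_sum_right power2_eq_square)
    also have "\<dots> = (\<Sum>i<k. (snd (\<Lambda> (x, u)) i)\<^sup>2)" by (rule sum.cong) (auto simp: \<Lambda>_def T_def)
    finally show "(\<Sum>i<k. (snd (\<Lambda> (x, u)) i)\<^sup>2) = (norm u)\<^sup>2" by simp
  qed
qed


lemma dir32:
  fixes M :: "'x measure" and V :: "'x \<Rightarrow> 'a::euclidean_space set"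
    and \<Lambda> :: "'x \<times> 'a \<Rightarrow> 'x \<times> (nat \<Rightarrow> real)"
  assumes Vg: "\<forall>x\<in>space M. V x \<in> grassmannian k" and XS: "X \<in> sets M"
    and bij: "bij_betw \<Lambda> {(x, u). x \<in> X \<and> u \<in> V x} (X \<times> Rk k)"
    and mI: "the_inv_into {(x, u). x \<in> X \<and> u \<in> V x} \<Lambda> \<in>
              measurable (restrict_space (M \<Otimes>\<^sub>M Rk_borel k) (X \<times> Rk k))
                         (restrict_space (M \<Otimes>\<^sub>M (borel :: 'a measure)) {(x, u). x \<in> X \<and> u \<in> V x})"
    and fstL: "\<forall>x\<in>X. \<forall>u\<in>V x. fst (\<Lambda> (x, u)) = x"
    and fib: "\<forall>x\<in>X.
               bij_betw (\<lambda>u. snd (\<Lambda> (x, u))) (V x) (Rk k) \<and>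
               (\<forall>u\<in>V x. \<forall>w\<in>V x. \<forall>i<k.
                  snd (\<Lambda> (x, u + w)) i = snd (\<Lambda> (x, u)) i + snd (\<Lambda> (x, w)) i) \<and>
               (\<forall>u\<in>V x. \<forall>c::real. \<forall>i<k.
                  snd (\<Lambda> (x, c *\<^sub>R u)) i = c * snd (\<Lambda> (x, u)) i) \<and>
               (\<forall>u\<in>V x. (\<Sum>i<k. (snd (\<Lambda> (x, u)) i)\<^sup>2) = (norm u)\<^sup>2)"
  shows "\<exists>v :: nat \<Rightarrow> 'x \<Rightarrow> 'a.
            (\<forall>i<k. v i \<in> borel_measurable (restrict_space M X)) \<and>
            (\<forall>x\<in>X. (\<forall>i<k. norm (v i x) = 1) \<and>
                     (\<forall>i<k. \<forall>j<k. i \<noteq> j \<longrightarrow> v i x \<bullet> v j x = 0) \<and>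
                     span {v i x | i. i < k} = V x)"
proof -
  let ?G = "{(x, u). x \<in> X \<and> u \<in> V x}"
  let ?\<Psi> = "the_inv_into ?G \<Lambda>"
  define e where "e i = (\<lambda>j. if j < k then (if j = i then 1 else 0) else undefined :: real)" for i
  have eRk: "e i \<in> Rk k" for i by (simp add: e_def Rk_def PiE_iff extensional_def)
  define v where "v i x = snd (?\<Psi> (x, e i))" for i x
  have pairm: "(\<lambda>x. (x, e i)) \<in> measurable (restrict_space M X) (restrict_space (M \<Otimes>\<^sub>M Rk_borel k) (X \<times> Rk k))" for i
  proof (rule measurable_restrict_space2)
    show "(\<lambda>x. (x, e i)) \<in> space (restrict_space M X) \<rightarrow> X \<times> Rk k" using eRk XS by auto
    have 1: "(\<lambda>x. x) \<in> measurable (restrict_space M X) M"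
      by (rule measurable_restrict_space1) (rule measurable_ident_sets[OF refl])
    have 2: "(\<lambda>x. e i) \<in> measurable (restrict_space M X) (Rk_borel k)"
      by (rule measurable_const) (use eRk in \<open>simp add: Rk_borel_def space_PiM Rk_def\<close>)
    show "(\<lambda>x. (x, e i)) \<in> measurable (restrict_space M X) (M \<Otimes>\<^sub>M Rk_borel k)"
      by (rule measurable_Pair[OF 1 2])
  qed
  have vm: "v i \<in> borel_measurable (restrict_space M X)" for i
  proof -
    have "(\<lambda>x. snd (?\<Psi> (x, e i))) \<in> borel_measurable (restrict_space M X)"
      by (rule measurable_compose[OF measurable_compose[OF pairm mI] measurable_restrict_space1[OF measurable_snd]])
    then show ?thesis by (simp add: v_def[abs_def])
  qed
  have props: "(\<forall>i<k. norm (v i x) = 1) \<and> (\<forall>i<k. \<forall>j<k. i \<noteq> j \<longrightarrow> v i x \<bullet> v j x = 0) \<and>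
                     span {v i x | i. i < k} = V x" if x: "x \<in> X" for x
  proof -
    define L where "L u = snd (\<Lambda> (x, u))" for u
    have Lbij: "bij_betw L (V x) (Rk k)" using fib x by (simp add: L_def[abs_def])
    have Ladd: "L (u + w) i = L u i + L w i" if "u \<in> V x" "w \<in> V x" "i < k" for u w i
      using fib x that by (simp add: L_def)
    have Lnorm: "(\<Sum>i<k. (L u i)\<^sup>2) = (norm u)\<^sup>2" if "u \<in> V x" for u
      using fib x that by (simp add: L_def)
    have xM: "x \<in> space M" using x XS sets.sets_into_space by blast
    have sub: "subspace (V x)" using Vg xM by (simp add: grassmannian_def)
    have inj: "inj_on \<Lambda> ?G" by (rule bij_betw_imp_inj_on[OF bij])
    have we: "v i x \<in> V x \<and> L (v i x) = e i" for i
    proof -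
      have img: "L ` V x = Rk k" using Lbij by (simp add: bij_betw_def)
      have "e i \<in> L ` V x" unfolding img by (rule eRk)
      then obtain u where u1: "u \<in> V x" and u2: "e i = L u" by (rule imageE)
      have u: "u \<in> V x" "L u = e i" using u1 u2 by simp_all
      have f1: "fst (\<Lambda> (x, u)) = x" using fstL x u by blast
      have f2: "snd (\<Lambda> (x, u)) = e i" using u(2) unfolding L_def .
      have "\<Lambda> (x, u) = (x, e i)" by (rule prod_eqI) (simp_all only: f1 f2 fst_conv snd_conv)
      moreover have "(x, u) \<in> ?G" using x u by blast
      ultimately have "?\<Psi> (x, e i) = (x, u)" using the_inv_into_f_eq[OF inj] by blast
      then have "v i x = u" unfolding v_def by simp
      then show ?thesis using u by simp
    qed
    have polar: "u \<bullet> w = (\<Sum>l<k. L u l * L w l)" if u: "u \<in> V x" and w: "w \<in> V x" for u w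
    proof -
      have uw: "u + w \<in> V x" by (rule subspace_add[OF sub u w])
      have "(\<Sum>l<k. (L (u + w) l)\<^sup>2) = (\<Sum>l<k. (L u l + L w l)\<^sup>2)"
        by (rule sum.cong) (simp_all add: Ladd[OF u w])
      then have n1: "(norm (u + w))\<^sup>2 = (\<Sum>l<k. (L u l + L w l)\<^sup>2)"
        using Lnorm[OF uw] by simp
      have "(\<Sum>l<k. (L u l + L w l)\<^sup>2) = (\<Sum>l<k. (L u l)\<^sup>2 + 2 * (L u l * L w l) + (L w l)\<^sup>2)"
        by (rule sum.cong) (simp_all add: power2_eq_square algebra_simps)
      also have "\<dots> = (\<Sum>l<k. (L u l)\<^sup>2) + 2 * (\<Sum>l<k. L u l * L w l) + (\<Sum>l<k. (L w l)\<^sup>2)"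
        by (simp only: sum.distrib sum_distrib_left)
      finally have ex: "(\<Sum>l<k. (L u l + L w l)\<^sup>2) = (\<Sum>l<k. (L u l)\<^sup>2) + 2 * (\<Sum>l<k. L u l * L w l) + (\<Sum>l<k. (L w l)\<^sup>2)" .
      have h: "(norm (u + w))\<^sup>2 - (norm u)\<^sup>2 - (norm w)\<^sup>2 = 2 * (\<Sum>l<k. L u l * L w l)"
        using n1 ex Lnorm[OF u] Lnorm[OF w] by linarith
      have dn: "u \<bullet> w = ((norm (u + w))\<^sup>2 - (norm u)\<^sup>2 - (norm w)\<^sup>2) / 2" by (rule dot_norm)
      show ?thesis using dn[unfolded h] by simp
    qed
    have ee: "(\<Sum>l<k. e i l * e j l) = (if i = j then 1 else 0)" if "i < k" for i j
    proof -
      have "(\<Sum>l<k. e i l * e j l) = (\<Sum>l<k. if l = i then (if i = j then 1 else 0) else 0)"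
        by (rule sum.cong) (auto simp: e_def)
      also have "\<dots> = (if i = j then 1 else 0)" using that by simp
      finally show ?thesis .
    qed
    have on: "onf k (\<lambda>i. v i x)"
      unfolding onf_def
    proof (intro allI impI)
      fix i j assume i: "i < k" and j: "j < k"
      have "v i x \<bullet> v j x = (\<Sum>l<k. L (v i x) l * L (v j x) l)"
        by (rule polar[OF conjunct1[OF we[of i]] conjunct1[OF we[of j]]])
      also have "\<dots> = (\<Sum>l<k. e i l * e j l)" using we by simp
      also have "\<dots> = (if i = j then 1 else 0)" by (rule ee[OF i])
      finally show "v i x \<bullet> v j x = (if i = j then 1 else 0)" .
    qed
    have "span {v i x | i. i < k} = V x"
    proof
      show "span {v i x |i. i < k} \<subseteq> V x"
        using we sub by (intro span_minimal) auto
      show "V x \<subseteq> span {v i x |i. i < k}"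
      proof
        fix u assume u: "u \<in> V x"
        define s where "s = (\<Sum>i<k. (u \<bullet> v i x) *\<^sub>R v i x)"
        have s_sp: "s \<in> span ((\<lambda>i. v i x) ` {..<k})" unfolding s_def by (rule span_frame_sum)
        have s_V: "s \<in> V x" unfolding s_def using we sub by (intro subspace_sum subspace_scale) auto
        define z where "z = u - s"
        have z: "z \<in> V x" unfolding z_def using u s_V sub subspace_diff by blast
        have Lz: "L z l = 0" if "l < k" for l
        proof -
          have "z \<bullet> v l x = 0" unfolding z_def s_def using sum_onf[OF on that]
            by (simp add: inner_diff_left)
          moreover have "z \<bullet> v l x = (\<Sum>j<k. L z j * e l j)" using polar[OF z] we by simp
          moreover have "(\<Sum>j<k. L z j * e l j) = L z l"
          proof -
            have "(\<Sum>j<k. L z j * e l j) = (\<Sum>j<k. if j = l then L z j else 0)"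
              by (rule sum.cong) (auto simp: e_def)
            then show ?thesis using that by simp
          qed
          ultimately show ?thesis by simp
        qed
        have "(\<Sum>i<k. (L z i)\<^sup>2) = 0" by (rule sum.neutral) (simp add: Lz)
        then have "(norm z)\<^sup>2 = 0" using Lnorm[OF z] by simp
        then have "u = s" by (simp add: z_def)
        moreover have "(\<lambda>i. v i x) ` {..<k} = {v i x |i. i < k}" by auto
        ultimately show "u \<in> span {v i x |i. i < k}" using s_sp by simp
      qed
    qed
    then show ?thesis using on by (simp add: onf_iff)
  qed
  show ?thesis
  proof (intro exI[of _ v] conjI allI impI ballI)
    fix i show "v i \<in> borel_measurable (restrict_space M X)" by (rule vm)
  next
    fix x i assume x: "x \<in> X" and i: "i < k"
    show "norm (v i x) = 1" using props[OF x] i by blast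
  next
    fix x i j assume x: "x \<in> X" and i: "i < k" and j: "j < k" and ij: "i \<noteq> j"
    show "v i x \<bullet> v j x = 0" using props[OF x] i j ij by blast
  next
    fix x assume x: "x \<in> X"
    show "span {v i x |i. i < k} = V x" using props[OF x] by blast
  qed
qed


theorem theoremA8:
  fixes M :: "'x measure" and k :: nat and V :: "'x \<Rightarrow> ('a::euclidean_space) set"
  assumes "finite_measure M"
    and "k \<le> DIM('a)"
    and "\<forall>x\<in>space M. V x \<in> grassmannian k"
  shows
    "((\<exists>X1\<in>sets M. emeasure M (space M - X1) = 0 \<and>
         V \<in> measurable (restrict_space M X1) (grass_borel k))
      \<longleftrightarrow>
      (\<exists>X2\<in>sets M. emeasure M (space M - X2) = 0 \<and>
         (\<exists>v :: nat \<Rightarrow> 'x \<Rightarrow> 'a.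
            (\<forall>i<k. v i \<in> borel_measurable (restrict_space M X2)) \<and>
            (\<forall>x\<in>X2. (\<forall>i<k. norm (v i x) = 1) \<and>
                     (\<forall>i<k. \<forall>j<k. i \<noteq> j \<longrightarrow> v i x \<bullet> v j x = 0) \<and>
                     span {v i x | i. i < k} = V x))))
     \<and>
     ((\<exists>X2\<in>sets M. emeasure M (space M - X2) = 0 \<and>
         (\<exists>v :: nat \<Rightarrow> 'x \<Rightarrow> 'a.
            (\<forall>i<k. v i \<in> borel_measurable (restrict_space M X2)) \<and>
            (\<forall>x\<in>X2. (\<forall>i<k. norm (v i x) = 1) \<and>
                     (\<forall>i<k. \<forall>j<k. i \<noteq> j \<longrightarrow> v i x \<bullet> v j x = 0) \<and>
                     span {v i x | i. i < k} = V x)))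
      \<longleftrightarrow>
      (\<exists>X3\<in>sets M. emeasure M (space M - X3) = 0 \<and>
         (\<exists>\<Lambda> :: 'x \<times> 'a \<Rightarrow> 'x \<times> (nat \<Rightarrow> real).
            bij_betw \<Lambda> {(x, u). x \<in> X3 \<and> u \<in> V x} (X3 \<times> Rk k) \<and>
            \<Lambda> \<in> measurable (restrict_space (M \<Otimes>\<^sub>M (borel :: 'a measure)) {(x, u). x \<in> X3 \<and> u \<in> V x})
                          (restrict_space (M \<Otimes>\<^sub>M Rk_borel k) (X3 \<times> Rk k)) \<and>
            the_inv_into {(x, u). x \<in> X3 \<and> u \<in> V x} \<Lambda> \<in>
              measurable (restrict_space (M \<Otimes>\<^sub>M Rk_borel k) (X3 \<times> Rk k))
                         (restrict_space (M \<Otimes>\<^sub>M (borel :: 'a measure)) {(x, u). x \<in> X3 \<and> u \<in> V x}) \<and>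
            (\<forall>x\<in>X3. \<forall>u\<in>V x. fst (\<Lambda> (x, u)) = x) \<and>
            (\<forall>x\<in>X3.
               bij_betw (\<lambda>u. snd (\<Lambda> (x, u))) (V x) (Rk k) \<and>
               (\<forall>u\<in>V x. \<forall>w\<in>V x. \<forall>i<k.
                  snd (\<Lambda> (x, u + w)) i = snd (\<Lambda> (x, u)) i + snd (\<Lambda> (x, w)) i) \<and>
               (\<forall>u\<in>V x. \<forall>c::real. \<forall>i<k.
                  snd (\<Lambda> (x, c *\<^sub>R u)) i = c * snd (\<Lambda> (x, u)) i) \<and>
               (\<forall>u\<in>V x. (\<Sum>i<k. (snd (\<Lambda> (x, u)) i)\<^sup>2) = (norm u)\<^sup>2)))))"
  proof (intro conjI iffI)
  assume "\<exists>X1\<in>sets M. emeasure M (space M - X1) = 0 \<and>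
         V \<in> measurable (restrict_space M X1) (grass_borel k)"
  then obtain X1 where X1: "X1 \<in> sets M" "emeasure M (space M - X1) = 0"
    "V \<in> measurable (restrict_space M X1) (grass_borel k)" by blast
  show "\<exists>X2\<in>sets M. emeasure M (space M - X2) = 0 \<and>
         (\<exists>v :: nat \<Rightarrow> 'x \<Rightarrow> 'a.
            (\<forall>i<k. v i \<in> borel_measurable (restrict_space M X2)) \<and>
            (\<forall>x\<in>X2. (\<forall>i<k. norm (v i x) = 1) \<and>
                     (\<forall>i<k. \<forall>j<k. i \<noteq> j \<longrightarrow> v i x \<bullet> v j x = 0) \<and>
                     span {v i x | i. i < k} = V x))"
    by (rule bexI[of _ X1], rule conjI, rule X1(2), rule dir12[OF assms(3) X1(1) X1(3)], rule X1(1))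
next
  assume "\<exists>X2\<in>sets M. emeasure M (space M - X2) = 0 \<and>
         (\<exists>v :: nat \<Rightarrow> 'x \<Rightarrow> 'a.
            (\<forall>i<k. v i \<in> borel_measurable (restrict_space M X2)) \<and>
            (\<forall>x\<in>X2. (\<forall>i<k. norm (v i x) = 1) \<and>
                     (\<forall>i<k. \<forall>j<k. i \<noteq> j \<longrightarrow> v i x \<bullet> v j x = 0) \<and>
                     span {v i x | i. i < k} = V x))"
  then show "\<exists>X1\<in>sets M. emeasure M (space M - X1) = 0 \<and>
         V \<in> measurable (restrict_space M X1) (grass_borel k)"
    apply (elim bexE conjE exE)
    apply (rule bexI, rule conjI, assumption)
     apply (rule dir21[OF assms(3)], assumption+)
    done
next
  assume "\<exists>X2\<in>sets M. emeasure M (space M - X2) = 0 \<and>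
         (\<exists>v :: nat \<Rightarrow> 'x \<Rightarrow> 'a.
            (\<forall>i<k. v i \<in> borel_measurable (restrict_space M X2)) \<and>
            (\<forall>x\<in>X2. (\<forall>i<k. norm (v i x) = 1) \<and>
                     (\<forall>i<k. \<forall>j<k. i \<noteq> j \<longrightarrow> v i x \<bullet> v j x = 0) \<and>
                     span {v i x | i. i < k} = V x))"
  then show "\<exists>X3\<in>sets M. emeasure M (space M - X3) = 0 \<and>
         (\<exists>\<Lambda> :: 'x \<times> 'a \<Rightarrow> 'x \<times> (nat \<Rightarrow> real).
            bij_betw \<Lambda> {(x, u). x \<in> X3 \<and> u \<in> V x} (X3 \<times> Rk k) \<and>
            \<Lambda> \<in> measurable (restrict_space (M \<Otimes>\<^sub>M (borel :: 'a measure)) {(x, u). x \<in> X3 \<and> u \<in> V x})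
                          (restrict_space (M \<Otimes>\<^sub>M Rk_borel k) (X3 \<times> Rk k)) \<and>
            the_inv_into {(x, u). x \<in> X3 \<and> u \<in> V x} \<Lambda> \<in>
              measurable (restrict_space (M \<Otimes>\<^sub>M Rk_borel k) (X3 \<times> Rk k))
                         (restrict_space (M \<Otimes>\<^sub>M (borel :: 'a measure)) {(x, u). x \<in> X3 \<and> u \<in> V x}) \<and>
            (\<forall>x\<in>X3. \<forall>u\<in>V x. fst (\<Lambda> (x, u)) = x) \<and>
            (\<forall>x\<in>X3.
               bij_betw (\<lambda>u. snd (\<Lambda> (x, u))) (V x) (Rk k) \<and>
               (\<forall>u\<in>V x. \<forall>w\<in>V x. \<forall>i<k.
                  snd (\<Lambda> (x, u + w)) i = snd (\<Lambda> (x, u)) i + snd (\<Lambda> (x, w)) i) \<and>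
               (\<forall>u\<in>V x. \<forall>c::real. \<forall>i<k.
                  snd (\<Lambda> (x, c *\<^sub>R u)) i = c * snd (\<Lambda> (x, u)) i) \<and>
               (\<forall>u\<in>V x. (\<Sum>i<k. (snd (\<Lambda> (x, u)) i)\<^sup>2) = (norm u)\<^sup>2)))"
    apply (elim bexE conjE exE)
    apply (rule bexI, rule conjI, assumption)
     apply (rule dir23[OF assms(3)], assumption+)
    done
next
  assume "\<exists>X3\<in>sets M. emeasure M (space M - X3) = 0 \<and>
         (\<exists>\<Lambda> :: 'x \<times> 'a \<Rightarrow> 'x \<times> (nat \<Rightarrow> real).
            bij_betw \<Lambda> {(x, u). x \<in> X3 \<and> u \<in> V x} (X3 \<times> Rk k) \<and>
            \<Lambda> \<in> measurable (restrict_space (M \<Otimes>\<^sub>M (borel :: 'a measure)) {(x, u). x \<in> X3 \<and> u \<in> V x})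
                          (restrict_space (M \<Otimes>\<^sub>M Rk_borel k) (X3 \<times> Rk k)) \<and>
            the_inv_into {(x, u). x \<in> X3 \<and> u \<in> V x} \<Lambda> \<in>
              measurable (restrict_space (M \<Otimes>\<^sub>M Rk_borel k) (X3 \<times> Rk k))
                         (restrict_space (M \<Otimes>\<^sub>M (borel :: 'a measure)) {(x, u). x \<in> X3 \<and> u \<in> V x}) \<and>
            (\<forall>x\<in>X3. \<forall>u\<in>V x. fst (\<Lambda> (x, u)) = x) \<and>
            (\<forall>x\<in>X3.
               bij_betw (\<lambda>u. snd (\<Lambda> (x, u))) (V x) (Rk k) \<and>
               (\<forall>u\<in>V x. \<forall>w\<in>V x. \<forall>i<k.
                  snd (\<Lambda> (x, u + w)) i = snd (\<Lambda> (x, u)) i + snd (\<Lambda> (x, w)) i) \<and>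
               (\<forall>u\<in>V x. \<forall>c::real. \<forall>i<k.
                  snd (\<Lambda> (x, c *\<^sub>R u)) i = c * snd (\<Lambda> (x, u)) i) \<and>
               (\<forall>u\<in>V x. (\<Sum>i<k. (snd (\<Lambda> (x, u)) i)\<^sup>2) = (norm u)\<^sup>2)))"
  then show "\<exists>X2\<in>sets M. emeasure M (space M - X2) = 0 \<and>
         (\<exists>v :: nat \<Rightarrow> 'x \<Rightarrow> 'a.
            (\<forall>i<k. v i \<in> borel_measurable (restrict_space M X2)) \<and>
            (\<forall>x\<in>X2. (\<forall>i<k. norm (v i x) = 1) \<and>
                     (\<forall>i<k. \<forall>j<k. i \<noteq> j \<longrightarrow> v i x \<bullet> v j x = 0) \<and>
                     span {v i x | i. i < k} = V x))"
    apply (elim bexE conjE exE)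
    apply (rule bexI, rule conjI, assumption)
     apply (rule dir32[OF assms(3)], assumption+)
    done
qed

end
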